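(* Let $\mu$ be a monotone system over $\{0,1\}^V$ and $\theta\in(0,1)$. Then the chain $P_{\mathrm{s\text{-}GD}}$ on $\Omega(\pi)$ is stochastically monotone.
   Context: Monotone system: for every $v$ and all feasible $\sigma\preceq\tau$ in $\{0,1\}^{V\setminus\{v\}}$ (coordinatewise), $\mu^\sigma_v(1)\le\mu^\tau_v(1)$. Tilted $(\theta*\mu)(\sigma)\propto\mu(\sigma)\theta^{\|\sigma\|_1}$. $\mathsf{lift}:\{0,1\}^V\to\{0,1,\star\}^V$ random: independently per coordinate $0\mapsto0$, $1\mapsto\star$ w.p. $1-\theta$, $1\mapsto1$ w.p. $\theta$; $\mathsf{contr}$: $0\mapsto0$, $1,\star\mapsto1$. $\pi$: law of $\mathsf{lift}(X)$, $X\sim\mu$, support $\Omega(\pi)$. $P_{\mathrm{s\text{-}GD}}$: from $X\in\Omega(\pi)$, pick $v$ uniformly; if $X_v=\star$ keep it; otherwise resample $X_v\in\{0,1\}$ from $(\theta*\mu)_v^{\sigma_{V\setminus\{v\}}}$ where $\sigma=\mathsf{contr}(X)$. Order $0<1<\star$, coordinatewise partial order. $P$ is stochastically monotone if $Pf$ is increasing for every increasing $f:\Omega(\pi)\to\mathbb R_{\ge0}$. *)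

theory Defs
  imports Complex_Main
begin

text \<open>Lifted spins: 0, 1 and star, ordered 0 < 1 < star.\<close>
datatype lspin = S0 | S1 | SS

lemma UNIV_lspin: "(UNIV :: lspin set) = {S0, S1, SS}"
  using lspin.exhaust by auto

instance lspin :: finite
  by standard (simp add: UNIV_lspin)

fun lrank :: "lspin \<Rightarrow> nat" where
  "lrank S0 = 0" | "lrank S1 = 1" | "lrank SS = 2"

definition conf_le :: "('v \<Rightarrow> lspin) \<Rightarrow> ('v \<Rightarrow> lspin) \<Rightarrow> bool" where
  "conf_le X Y = (\<forall>v. lrank (X v) \<le> lrank (Y v))"

text \<open>Contraction: 0 to 0, 1 and star to 1 (True encodes 1).\<close>
definition contr :: "('v \<Rightarrow> lspin) \<Rightarrow> ('v \<Rightarrow> bool)" where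
  "contr X = (\<lambda>v. X v \<noteq> S0)"

fun lift_coord_prob :: "real \<Rightarrow> bool \<Rightarrow> lspin \<Rightarrow> real" where
  "lift_coord_prob \<theta> False x = (if x = S0 then 1 else 0)"
| "lift_coord_prob \<theta> True x = (if x = S1 then \<theta> else if x = SS then 1 - \<theta> else 0)"

definition lift_prob :: "real \<Rightarrow> ('v::finite \<Rightarrow> bool) \<Rightarrow> ('v \<Rightarrow> lspin) \<Rightarrow> real" where
  "lift_prob \<theta> \<sigma> X = (\<Prod>v\<in>UNIV. lift_coord_prob \<theta> (\<sigma> v) (X v))"

text \<open>pi: law of lift(X) for X distributed according to mu.\<close>
definition piL :: "(('v::finite \<Rightarrow> bool) \<Rightarrow> real) \<Rightarrow> real \<Rightarrow> ('v \<Rightarrow> lspin) \<Rightarrow> real" where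
  "piL \<mu> \<theta> X = (\<Sum>\<sigma>\<in>UNIV. \<mu> \<sigma> * lift_prob \<theta> \<sigma> X)"

definition Omega :: "(('v::finite \<Rightarrow> bool) \<Rightarrow> real) \<Rightarrow> real \<Rightarrow> ('v \<Rightarrow> lspin) set" where
  "Omega \<mu> \<theta> = {X. piL \<mu> \<theta> X > 0}"

definition tilt :: "(('v::finite \<Rightarrow> bool) \<Rightarrow> real) \<Rightarrow> real \<Rightarrow> ('v \<Rightarrow> bool) \<Rightarrow> real" where
  "tilt \<mu> \<theta> \<sigma> = \<mu> \<sigma> * \<theta> ^ card {u. \<sigma> u}
      / (\<Sum>\<tau>\<in>UNIV. \<mu> \<tau> * \<theta> ^ card {u. \<tau> u})"

text \<open>The pinning sigma on V minus v (represented by a full configuration whose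
  v-coordinate is ignored) is feasible iff its marginal probability is positive.\<close>
definition cond_feasible :: "(('v \<Rightarrow> bool) \<Rightarrow> real) \<Rightarrow> 'v \<Rightarrow> ('v \<Rightarrow> bool) \<Rightarrow> bool" where
  "cond_feasible \<mu> v \<sigma> = (\<mu> (\<sigma>(v := False)) + \<mu> (\<sigma>(v := True)) > 0)"

definition cond_prob1 :: "(('v \<Rightarrow> bool) \<Rightarrow> real) \<Rightarrow> 'v \<Rightarrow> ('v \<Rightarrow> bool) \<Rightarrow> real" where
  "cond_prob1 \<mu> v \<sigma> = \<mu> (\<sigma>(v := True)) / (\<mu> (\<sigma>(v := False)) + \<mu> (\<sigma>(v := True)))"

definition monotone_system :: "(('v \<Rightarrow> bool) \<Rightarrow> real) \<Rightarrow> bool" where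
  "monotone_system \<mu> = (\<forall>v \<sigma> \<tau>. (\<forall>u. u \<noteq> v \<longrightarrow> \<sigma> u \<le> \<tau> u)
      \<and> cond_feasible \<mu> v \<sigma> \<and> cond_feasible \<mu> v \<tau>
      \<longrightarrow> cond_prob1 \<mu> v \<sigma> \<le> cond_prob1 \<mu> v \<tau>)"

definition sgd_local :: "(('v::finite \<Rightarrow> bool) \<Rightarrow> real) \<Rightarrow> real \<Rightarrow> 'v
    \<Rightarrow> ('v \<Rightarrow> lspin) \<Rightarrow> ('v \<Rightarrow> lspin) \<Rightarrow> real" where
  "sgd_local \<mu> \<theta> v X Y =
    (if X v = SS then (if Y = X then 1 else 0)
     else if (\<forall>u. u \<noteq> v \<longrightarrow> Y u = X u) then
       (let p = cond_prob1 (tilt \<mu> \<theta>) v (contr X) in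
        (case Y v of S1 \<Rightarrow> p | S0 \<Rightarrow> 1 - p | SS \<Rightarrow> 0))
     else 0)"

definition P_sgd :: "(('v::finite \<Rightarrow> bool) \<Rightarrow> real) \<Rightarrow> real
    \<Rightarrow> ('v \<Rightarrow> lspin) \<Rightarrow> ('v \<Rightarrow> lspin) \<Rightarrow> real" where
  "P_sgd \<mu> \<theta> X Y = (\<Sum>v\<in>UNIV. sgd_local \<mu> \<theta> v X Y) / real (card (UNIV :: 'v set))"

definition stoch_monotone :: "('v \<Rightarrow> lspin) set
    \<Rightarrow> (('v \<Rightarrow> lspin) \<Rightarrow> ('v \<Rightarrow> lspin) \<Rightarrow> real) \<Rightarrow> bool" where
  "stoch_monotone Om P = (\<forall>f :: ('v \<Rightarrow> lspin) \<Rightarrow> real.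
      (\<forall>X\<in>Om. 0 \<le> f X) \<and> (\<forall>X\<in>Om. \<forall>Y\<in>Om. conf_le X Y \<longrightarrow> f X \<le> f Y)
      \<longrightarrow> (\<forall>X\<in>Om. \<forall>Y\<in>Om. conf_le X Y \<longrightarrow>
             (\<Sum>Z\<in>Om. P X Z * f Z) \<le> (\<Sum>Z\<in>Om. P Y Z * f Z)))"

end

theory Submission
  imports Defs
begin

lemma lp_pos:
  assumes "0 < \<theta>" "\<theta> < 1"
  shows "lift_prob \<theta> (contr X) (X::'v::finite \<Rightarrow> lspin) > 0"
  unfolding lift_prob_def
proof (rule prod_pos)
  fix v assume "v \<in> (UNIV::'v set)"
  show "0 < lift_coord_prob \<theta> (contr X v) (X v)"
    using assms by (cases "X v") (auto simp: contr_def)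
qed

lemma lp_zero:
  assumes "\<sigma> \<noteq> contr X"
  shows "lift_prob \<theta> \<sigma> (X::'v::finite \<Rightarrow> lspin) = 0"
proof -
  obtain v where v: "\<sigma> v \<noteq> contr X v" using assms by blast
  have "lift_coord_prob \<theta> (\<sigma> v) (X v) = 0"
    using v by (cases "X v"; cases "\<sigma> v") (auto simp: contr_def)
  then show ?thesis unfolding lift_prob_def
    by (intro prod_zero) auto
qed

lemma Omega_iff:
  assumes "0 < \<theta>" "\<theta> < 1" "\<forall>\<sigma>. 0 \<le> \<mu> \<sigma>"
  shows "X \<in> Omega \<mu> \<theta> \<longleftrightarrow> \<mu> (contr X) > 0"
proof -
  have "piL \<mu> \<theta> X = (\<Sum>\<sigma>\<in>UNIV. if \<sigma> = contr X then \<mu> \<sigma> * lift_prob \<theta> (contr X) X else 0)"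
    unfolding piL_def by (intro sum.cong) (auto simp: lp_zero)
  also have "\<dots> = \<mu> (contr X) * lift_prob \<theta> (contr X) X" by simp
  finally show ?thesis using lp_pos[OF assms(1,2), of X] assms(3)
    unfolding Omega_def by (simp add: zero_less_mult_iff)
qed

lemma card_upd:
  "card {u. (\<sigma>(v:=True)) u} = Suc (card {u. ((\<sigma>::'v::finite\<Rightarrow>bool)(v:=False)) u})"
proof -
  have "{u. (\<sigma>(v:=True)) u} = insert v {u. (\<sigma>(v:=False)) u}" by auto
  moreover have "v \<notin> {u. (\<sigma>(v:=False)) u}" by simp
  ultimately show ?thesis by simp
qed

lemma cp_tilt:
  assumes "0 < \<theta>" "\<forall>\<sigma>. 0 \<le> \<mu> \<sigma>" "(\<Sum>\<sigma>\<in>UNIV. \<mu> \<sigma>) = 1"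
  shows "cond_prob1 (tilt \<mu> \<theta>) v \<sigma> =
     \<theta> * \<mu> (\<sigma>(v:=True)) / (\<mu> ((\<sigma>::'v::finite\<Rightarrow>bool)(v:=False)) + \<theta> * \<mu> (\<sigma>(v:=True)))"
proof -
  define D where "D = (\<Sum>\<tau>\<in>UNIV. \<mu> \<tau> * \<theta> ^ card {u. \<tau> u})"
  have "\<exists>\<sigma>0. \<mu> \<sigma>0 > 0"
  proof (rule ccontr)
    assume "\<not> ?thesis"
    then have "\<forall>\<sigma>. \<mu> \<sigma> = 0" using assms(2) by (meson less_eq_real_def not_less)
    then show False using assms(3) by simp
  qed
  then obtain \<sigma>0 where s0: "\<mu> \<sigma>0 > 0" by blast
  have "D > 0" unfolding D_def
    apply (rule sum_pos2[where i=\<sigma>0])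
    using s0 assms by auto
  define k where "k = card {u. (\<sigma>(v:=False)) u}"
  define a where "a = \<mu> (\<sigma>(v:=True))"
  define b where "b = \<mu> (\<sigma>(v:=False))"
  have tk: "\<theta>^k > 0" using assms by simp
  have "cond_prob1 (tilt \<mu> \<theta>) v \<sigma> = (a * \<theta>^k * \<theta> / D) / (b * \<theta>^k / D + a * \<theta>^k * \<theta> / D)"
    unfolding cond_prob1_def tilt_def D_def[symmetric] card_upd k_def[symmetric] a_def b_def
    by (simp add: mult_ac)
  also have "\<dots> = (\<theta>^k/D * (\<theta> * a)) / (\<theta>^k/D * (b + \<theta> * a))"
    by (simp add: field_simps)
  also have "\<dots> = \<theta> * a / (b + \<theta> * a)"
    using tk \<open>D > 0\<close> assms(1) by (subst mult_divide_mult_cancel_left) auto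
  finally show ?thesis unfolding a_def b_def .
qed


lemma contr_upd1: "contr (X(v:=S1)) = (contr X)(v:=True)"
  by (auto simp: contr_def)
lemma contr_upd0: "contr (X(v:=S0)) = (contr X)(v:=False)"
  by (auto simp: contr_def)

lemma p_facts:
  fixes \<mu> :: "('v::finite \<Rightarrow> bool) \<Rightarrow> real" and v :: 'v
  assumes "0 < \<theta>" "\<theta> < 1" "\<forall>\<sigma>. 0 \<le> \<mu> \<sigma>" "(\<Sum>\<sigma>\<in>UNIV. \<mu> \<sigma>) = 1"
    and X: "X \<in> Omega \<mu> \<theta>"
  defines "p \<equiv> cond_prob1 (tilt \<mu> \<theta>) v (contr X)"
  shows "0 \<le> p" "p \<le> 1" "p > 0 \<Longrightarrow> X(v:=S1) \<in> Omega \<mu> \<theta>"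
    "p < 1 \<Longrightarrow> X(v:=S0) \<in> Omega \<mu> \<theta>"
    "p = \<theta> * \<mu> ((contr X)(v:=True)) / (\<mu> ((contr X)(v:=False)) + \<theta> * \<mu> ((contr X)(v:=True)))"
proof -
  define a where "a = \<mu> ((contr X)(v:=True))"
  define b where "b = \<mu> ((contr X)(v:=False))"
  have pe: "p = \<theta> * a / (b + \<theta> * a)" unfolding p_def a_def b_def
    by (rule cp_tilt[OF assms(1,3,4)])
  then show "p = \<theta> * \<mu> ((contr X)(v:=True)) / (\<mu> ((contr X)(v:=False)) + \<theta> * \<mu> ((contr X)(v:=True)))"
    unfolding a_def b_def .
  have a0: "a \<ge> 0" "b \<ge> 0" using assms(3) a_def b_def by auto
  have "\<mu> (contr X) > 0" using X Omega_iff assms(1,2,3) by blast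
  moreover have "contr X = (contr X)(v:=True) \<or> contr X = (contr X)(v:=False)"
    by (metis (full_types) fun_upd_triv)
  ultimately have ab: "a > 0 \<or> b > 0" unfolding a_def b_def by auto
  have den: "b + \<theta> * a > 0" using ab a0 assms(1) by (auto intro: add_pos_nonneg add_nonneg_pos)
  show "0 \<le> p" using pe den a0 assms(1) by simp
  show "p \<le> 1" using pe den a0 assms(1) by simp
  show "X(v:=S1) \<in> Omega \<mu> \<theta>" if "p > 0"
  proof -
    have "a \<noteq> 0" using that pe by auto
    then have "a > 0" using a0 by simp
    then show ?thesis using Omega_iff[OF assms(1,2,3)] contr_upd1 a_def by metis
  qed
  show "X(v:=S0) \<in> Omega \<mu> \<theta>" if "p < 1"
  proof -
    have "b \<noteq> 0" using that pe den by auto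
    then have "b > 0" using a0 by simp
    then show ?thesis using Omega_iff[OF assms(1,2,3)] contr_upd0 b_def by metis
  qed
qed

lemma local_sum:
  fixes \<mu> :: "('v::finite \<Rightarrow> bool) \<Rightarrow> real" and \<theta> :: real and v :: 'v
  assumes "X v \<noteq> SS"
  defines "p \<equiv> cond_prob1 (tilt \<mu> \<theta>) v (contr X)"
  shows "(\<Sum>Z\<in>Om. sgd_local \<mu> \<theta> v X Z * f Z) =
     (if X(v:=S1) \<in> Om then p * f (X(v:=S1)) else 0) + (if X(v:=S0) \<in> Om then (1-p) * f (X(v:=S0)) else 0)"
proof -
  have "sgd_local \<mu> \<theta> v X Z * f Z = (if Z = X(v:=S1) then p * f Z else 0) + (if Z = X(v:=S0) then (1-p) * f Z else 0)" for Z
  proof (cases "\<forall>u. u \<noteq> v \<longrightarrow> Z u = X u")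
    case True
    then have "Z = X(v := Z v)" by auto
    moreover have "X(v:=S0) \<noteq> X(v:=S1)" "X(v:=SS) \<noteq> X(v:=S1)" "X(v:=SS) \<noteq> X(v:=S0)"
      by (metis fun_upd_same lspin.distinct)+
    ultimately show ?thesis using assms(1) unfolding sgd_local_def p_def
      by (cases "Z v") (auto simp: Let_def)
  next
    case False
    then have "Z \<noteq> X(v:=S1)" "Z \<noteq> X(v:=S0)" by auto
    then show ?thesis using False assms(1) unfolding sgd_local_def by auto
  qed
  then have "(\<Sum>Z\<in>Om. sgd_local \<mu> \<theta> v X Z * f Z) = (\<Sum>Z\<in>Om. (if Z = X(v:=S1) then p * f Z else 0) + (if Z = X(v:=S0) then (1-p) * f Z else 0))"
    by simp
  also have "\<dots> = (if X(v:=S1) \<in> Om then p * f (X(v:=S1)) else 0) + (if X(v:=S0) \<in> Om then (1-p) * f (X(v:=S0)) else 0)"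
    by (simp add: sum.distrib sum.delta)
  finally show ?thesis .
qed

lemma stay_sum:
  assumes "X v = SS" "X \<in> Om"
  shows "(\<Sum>Z\<in>Om. sgd_local \<mu> \<theta> v X Z * f Z) = f X"
proof -
  have "(\<Sum>Z\<in>Om. sgd_local \<mu> \<theta> v X Z * f Z) = (\<Sum>Z\<in>Om. if Z = X then f Z else 0)"
    using assms(1) unfolding sgd_local_def by (intro sum.cong) auto
  also have "\<dots> = f X" using assms(2) by (simp add: sum.delta)
  finally show ?thesis .
qed


lemma conf_le_upd:
  "conf_le X Y \<Longrightarrow> lrank c \<le> lrank d \<Longrightarrow> conf_le (X(v:=c)) (Y(v:=d))"
  unfolding conf_le_def by auto

lemma alg:
  fixes a b a' b' \<theta> :: real
  assumes "a \<ge> 0" "b \<ge> 0" "a' \<ge> 0" "b' \<ge> 0" "a + b > 0" "a' + b' > 0" "\<theta> > 0"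
    and "a / (b + a) \<le> a' / (b' + a')"
  shows "\<theta> * a / (b + \<theta> * a) \<le> \<theta> * a' / (b' + \<theta> * a')"
proof -
  have d1: "b + a > 0" "b' + a' > 0" using assms by auto
  have h1: "a * (b' + a') \<le> a' * (b + a)"
    using assms(8) d1 by (simp add: divide_le_eq le_divide_eq mult_ac)
  then have h2: "a * b' \<le> a' * b" by (simp add: algebra_simps)
  have m: "\<theta> * a \<ge> 0" "\<theta> * a' \<ge> 0" "a > 0 \<Longrightarrow> \<theta> * a > 0" "a' > 0 \<Longrightarrow> \<theta> * a' > 0"
    using assms by auto
  have d2: "b + \<theta> * a > 0" "b' + \<theta> * a' > 0"
    using assms m by (smt (verit))+
  have "\<theta> * a * (b' + \<theta> * a') \<le> \<theta> * a' * (b + \<theta> * a)"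
  proof -
    have "\<theta> * (a * b') \<le> \<theta> * (a' * b)" using h2 assms(7) by simp
    then show ?thesis by (simp add: algebra_simps)
  qed
  then show ?thesis using d2 by (simp add: divide_le_eq le_divide_eq mult_ac)
qed

lemma lrank_SS: "lrank x \<le> lrank SS" by (cases x) auto

lemma site_mono:
  fixes \<mu> :: "('v::finite \<Rightarrow> bool) \<Rightarrow> real" and \<theta> :: real and v :: 'v
  assumes h: "\<forall>\<sigma>. 0 \<le> \<mu> \<sigma>" "(\<Sum>\<sigma>\<in>UNIV. \<mu> \<sigma>) = 1" "monotone_system \<mu>" "0 < \<theta>" "\<theta> < 1"
    and fnn: "\<forall>X\<in>Omega \<mu> \<theta>. 0 \<le> f X"
    and fmono: "\<forall>X\<in>Omega \<mu> \<theta>. \<forall>Y\<in>Omega \<mu> \<theta>. conf_le X Y \<longrightarrow> f X \<le> f Y"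
    and X: "X \<in> Omega \<mu> \<theta>" and Y: "Y \<in> Omega \<mu> \<theta>" and XY: "conf_le X Y"
  shows "(\<Sum>Z\<in>Omega \<mu> \<theta>. sgd_local \<mu> \<theta> v X Z * f Z) \<le> (\<Sum>Z\<in>Omega \<mu> \<theta>. sgd_local \<mu> \<theta> v Y Z * f Z)"
proof -
  define Om where "Om = Omega \<mu> \<theta>"
  define pX where "pX = cond_prob1 (tilt \<mu> \<theta>) v (contr X)"
  define pY where "pY = cond_prob1 (tilt \<mu> \<theta>) v (contr Y)"
  note pXf = p_facts[OF h(4,5,1,2) X, of v, folded pX_def]
  note pYf = p_facts[OF h(4,5,1,2) Y, of v, folded pY_def]
  show ?thesis
  proof (cases "Y v = SS")
    case YS: True
    have RHS: "(\<Sum>Z\<in>Om. sgd_local \<mu> \<theta> v Y Z * f Z) = f Y"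
      using stay_sum[where X=Y and v=v and Om=Om, OF YS] Y Om_def by simp
    show ?thesis
    proof (cases "X v = SS")
      case True
      then show ?thesis using stay_sum[where X=X and v=v and Om=Om, OF True] X RHS Om_def fmono Y XY by simp
    next
      case False
      have Yeq: "Y = Y(v:=SS)" using YS by auto
      have c1: "conf_le (X(v:=S1)) Y" using conf_le_upd[OF XY, of S1 SS v] Yeq by simp
      have c0: "conf_le (X(v:=S0)) Y" using conf_le_upd[OF XY, of S0 SS v] Yeq by simp
      have t1: "(if X(v:=S1) \<in> Om then pX * f (X(v:=S1)) else 0) \<le> pX * f Y"
        using c1 fmono Y fnn pXf(1) Om_def by (auto intro: mult_left_mono)
      have t0: "(if X(v:=S0) \<in> Om then (1-pX) * f (X(v:=S0)) else 0) \<le> (1-pX) * f Y"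
        using c0 fmono Y fnn pXf(2) Om_def by (auto intro: mult_left_mono)
      show ?thesis using local_sum[where X=X and v=v and \<mu>=\<mu> and \<theta>=\<theta> and Om=Om and f=f, OF False, folded pX_def] RHS t1 t0 Om_def
        by (simp add: algebra_simps)
    qed
  next
    case False
    have "lrank (X v) \<le> lrank (Y v)" using XY unfolding conf_le_def by blast
    then have XnS: "X v \<noteq> SS" using False by (cases "X v"; cases "Y v") auto
    have pXY: "pX \<le> pY"
    proof -
      have fe: "cond_feasible \<mu> v (contr X)" "cond_feasible \<mu> v (contr Y)"
      proof -
        have "\<mu> (contr X) > 0" "\<mu> (contr Y) > 0" using X Y Omega_iff[OF h(4,5,1)] by auto
        moreover have "contr X = (contr X)(v:=True) \<or> contr X = (contr X)(v:=False)"
          "contr Y = (contr Y)(v:=True) \<or> contr Y = (contr Y)(v:=False)"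
          by (metis (full_types) fun_upd_triv)+
        ultimately show "cond_feasible \<mu> v (contr X)" "cond_feasible \<mu> v (contr Y)"
          unfolding cond_feasible_def using h(1)
          by (smt (verit))+
      qed
      have mono: "cond_prob1 \<mu> v (contr X) \<le> cond_prob1 \<mu> v (contr Y)"
      proof -
        have "contr X u \<le> contr Y u" for u
        proof -
          have "lrank (X u) \<le> lrank (Y u)" using XY unfolding conf_le_def by blast
          then show ?thesis unfolding contr_def by (cases "X u"; cases "Y u") auto
        qed
        then have "\<forall>u. u \<noteq> v \<longrightarrow> contr X u \<le> contr Y u" by blast
        then show ?thesis using h(3) fe unfolding monotone_system_def by blast
      qed
      show ?thesis
        unfolding pXf(5) pYf(5)
        by (rule alg[OF _ _ _ _ _ _ h(4)]) (use h(1) mono fe in \<open>auto simp: cond_prob1_def cond_feasible_def add.commute\<close>)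
    qed
    define X1 where "X1 = X(v:=S1)"
    define X0 where "X0 = X(v:=S0)"
    define Y1 where "Y1 = Y(v:=S1)"
    define Y0 where "Y0 = Y(v:=S0)"
    have c00: "conf_le X0 Y0" using conf_le_upd[OF XY, of S0 S0 v] X0_def Y0_def by simp
    have c11: "conf_le X1 Y1" using conf_le_upd[OF XY, of S1 S1 v] X1_def Y1_def by simp
    have c01: "conf_le X0 Y1" using conf_le_upd[OF XY, of S0 S1 v] X0_def Y1_def by simp
    have cY: "conf_le Y0 Y1" unfolding conf_le_def Y0_def Y1_def by auto
    have L: "(\<Sum>Z\<in>Om. sgd_local \<mu> \<theta> v X Z * f Z) =
       (if X1 \<in> Om then pX * f X1 else 0) + (if X0 \<in> Om then (1-pX) * f X0 else 0)"
      using local_sum[where X=X and v=v and \<mu>=\<mu> and \<theta>=\<theta> and Om=Om and f=f, OF XnS, folded pX_def]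
      unfolding X1_def X0_def .
    have R: "(\<Sum>Z\<in>Om. sgd_local \<mu> \<theta> v Y Z * f Z) =
       (if Y1 \<in> Om then pY * f Y1 else 0) + (if Y0 \<in> Om then (1-pY) * f Y0 else 0)"
      using local_sum[where X=Y and v=v and \<mu>=\<mu> and \<theta>=\<theta> and Om=Om and f=f, OF False, folded pY_def]
      unfolding Y1_def Y0_def .
    have pX01: "0 \<le> pX" "pX \<le> 1" "pX > 0 \<Longrightarrow> X1 \<in> Om" "pX < 1 \<Longrightarrow> X0 \<in> Om"
      using pXf X1_def X0_def Om_def by auto
    have pY01: "0 \<le> pY" "pY \<le> 1" "pY > 0 \<Longrightarrow> Y1 \<in> Om" "pY < 1 \<Longrightarrow> Y0 \<in> Om"
      using pYf Y1_def Y0_def Om_def by auto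
    have fm: "\<And>A B. A \<in> Om \<Longrightarrow> B \<in> Om \<Longrightarrow> conf_le A B \<Longrightarrow> f A \<le> f B"
      using fmono Om_def by blast
    have fn: "\<And>A. A \<in> Om \<Longrightarrow> 0 \<le> f A" using fnn Om_def by blast
    have "(if X1 \<in> Om then pX * f X1 else 0) + (if X0 \<in> Om then (1-pX) * f X0 else 0)
        \<le> (if Y1 \<in> Om then pY * f Y1 else 0) + (if Y0 \<in> Om then (1-pY) * f Y0 else 0)"
    proof (cases "pX = 0")
      case True
      then have X0in: "X0 \<in> Om" using pX01 by simp
      have b1: "pY * f X0 \<le> (if Y1 \<in> Om then pY * f Y1 else 0)"
      proof (cases "pY = 0")
        case False
        then have "Y1 \<in> Om" using pY01 by simp
        then show ?thesis using fm[OF X0in _ c01] pY01(1) by (simp add: mult_left_mono)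
      qed simp
      have b0: "(1 - pY) * f X0 \<le> (if Y0 \<in> Om then (1-pY) * f Y0 else 0)"
      proof (cases "pY = 1")
        case False
        then have "Y0 \<in> Om" using pY01 by simp
        then show ?thesis using fm[OF X0in _ c00] pY01(2) by (simp add: mult_left_mono)
      qed simp
      have "(if X1 \<in> Om then pX * f X1 else 0) + (if X0 \<in> Om then (1-pX) * f X0 else 0) = f X0"
        using True X0in by simp
      moreover have "pY * f X0 + (1 - pY) * f X0 = f X0" by (simp add: algebra_simps)
      ultimately show ?thesis using b1 b0 by linarith
    next
      case pXn0: False
      show ?thesis
      proof (cases "pY = 1")
        case True
        then have Y1in: "Y1 \<in> Om" using pY01 by simp
        have a1: "(if X1 \<in> Om then pX * f X1 else 0) \<le> pX * f Y1"
          using fm[OF _ Y1in c11] fn[OF Y1in] pX01(1) by (simp add: mult_left_mono)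
        have a0: "(if X0 \<in> Om then (1-pX) * f X0 else 0) \<le> (1-pX) * f Y1"
          using fm[OF _ Y1in c01] fn[OF Y1in] pX01(2) by (simp add: mult_left_mono)
        show ?thesis using True Y1in a1 a0 by (simp add: algebra_simps)
      next
        case pY1: False
        have pos: "pX > 0" "pY < 1" using pXn0 pY1 pX01 pY01 by auto
        then have ins: "X1 \<in> Om" "X0 \<in> Om" "Y1 \<in> Om" "Y0 \<in> Om"
          using pX01 pY01 pXY by auto
        have i1: "pX * f X1 \<le> pX * f Y1" using fm[OF ins(1,3) c11] pX01 by (simp add: mult_left_mono)
        have i0: "(1-pX) * f X0 \<le> (1-pX) * f Y0" using fm[OF ins(2,4) c00] pX01 by (simp add: mult_left_mono)
        have i2: "(pY - pX) * f Y0 \<le> (pY - pX) * f Y1" using fm[OF ins(4,3) cY] pXY by (simp add: mult_left_mono)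
        show ?thesis using ins i1 i0 i2 by (simp add: algebra_simps)
      qed
    qed
    then show ?thesis using L R Om_def by simp
  qed
qed


theorem lemma5p3:
  fixes \<mu> :: "('v::finite \<Rightarrow> bool) \<Rightarrow> real" and \<theta> :: real
  assumes "\<forall>\<sigma>. 0 \<le> \<mu> \<sigma>"
    and "(\<Sum>\<sigma>\<in>UNIV. \<mu> \<sigma>) = 1"
    and "monotone_system \<mu>"
    and "0 < \<theta>" and "\<theta> < 1"
  shows "stoch_monotone (Omega \<mu> \<theta>) (P_sgd \<mu> \<theta>)"
  unfolding stoch_monotone_def
proof (intro allI impI ballI)
  fix f :: "('v \<Rightarrow> lspin) \<Rightarrow> real" and X Y
  assume f: "(\<forall>X\<in>Omega \<mu> \<theta>. 0 \<le> f X) \<and> (\<forall>X\<in>Omega \<mu> \<theta>. \<forall>Y\<in>Omega \<mu> \<theta>. conf_le X Y \<longrightarrow> f X \<le> f Y)"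
    and X: "X \<in> Omega \<mu> \<theta>" and Y: "Y \<in> Omega \<mu> \<theta>" and XY: "conf_le X Y"
  show "(\<Sum>Z\<in>Omega \<mu> \<theta>. P_sgd \<mu> \<theta> X Z * f Z) \<le> (\<Sum>Z\<in>Omega \<mu> \<theta>. P_sgd \<mu> \<theta> Y Z * f Z)"
  proof -
    have eq: "(\<Sum>Z\<in>Omega \<mu> \<theta>. P_sgd \<mu> \<theta> W Z * f Z) =
      (\<Sum>v\<in>UNIV. \<Sum>Z\<in>Omega \<mu> \<theta>. sgd_local \<mu> \<theta> v W Z * f Z) / real (card (UNIV :: 'v set))" for W
    proof -
      have "(\<Sum>Z\<in>Omega \<mu> \<theta>. P_sgd \<mu> \<theta> W Z * f Z) =
        (\<Sum>Z\<in>Omega \<mu> \<theta>. (\<Sum>v\<in>UNIV. sgd_local \<mu> \<theta> v W Z * f Z) / real (card (UNIV :: 'v set)))"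
        unfolding P_sgd_def by (simp add: sum_distrib_right)
      also have "\<dots> = (\<Sum>Z\<in>Omega \<mu> \<theta>. \<Sum>v\<in>UNIV. sgd_local \<mu> \<theta> v W Z * f Z) / real (card (UNIV :: 'v set))"
        by (simp add: sum_divide_distrib)
      also have "\<dots> = (\<Sum>v\<in>UNIV. \<Sum>Z\<in>Omega \<mu> \<theta>. sgd_local \<mu> \<theta> v W Z * f Z) / real (card (UNIV :: 'v set))"
        by (subst sum.swap) simp
      finally show ?thesis .
    qed
    have "(\<Sum>v\<in>UNIV. \<Sum>Z\<in>Omega \<mu> \<theta>. sgd_local \<mu> \<theta> v X Z * f Z)
        \<le> (\<Sum>v\<in>UNIV. \<Sum>Z\<in>Omega \<mu> \<theta>. sgd_local \<mu> \<theta> v Y Z * f Z)"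
      by (rule sum_mono, rule site_mono[OF assms]) (use f X Y XY in auto)
    then show "(\<Sum>Z\<in>Omega \<mu> \<theta>. P_sgd \<mu> \<theta> X Z * f Z) \<le> (\<Sum>Z\<in>Omega \<mu> \<theta>. P_sgd \<mu> \<theta> Y Z * f Z)"
      unfolding eq by (simp add: divide_right_mono)
  qed
qed

end
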